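(* Let $K$ be a non-archimedean local field and $G$ a subgroup of $\mathrm{SL}_n(K)$. Suppose either $\mathrm{char}(K)=0$, or $\mathrm{char}(K)=p>0$ and $G$ contains no elements of order $p$. Then $G$ is discrete if and only if every cyclic subgroup of $G$ is discrete.
   Context: A non-archimedean local field is a finite extension of $\mathbb{Q}_p$ or $\mathbb{F}_q((t))$. $\mathrm{SL}_n(K)$ has the subspace topology from $K^{n^2}$. *)

theory Defs
  imports "HOL-Analysis.Analysis"
begin

definition na_abs_value :: "('a::field \<Rightarrow> real) \<Rightarrow> bool" where
  "na_abs_value v \<longleftrightarrow>
     (\<forall>x. 0 \<le> v x) \<and> (\<forall>x. v x = 0 \<longleftrightarrow> x = 0) \<and>
     (\<forall>x y. v (x * y) = v x * v y) \<and>
     (\<forall>x y. v (x + y) \<le> max (v x) (v y))"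

definition abs_topology :: "('a::field \<Rightarrow> real) \<Rightarrow> 'a topology" where
  "abs_topology v = Metric_space.mtopology UNIV (\<lambda>x y. v (x - y))"

text \<open>(K, v) is a non-archimedean local field: a field with a nontrivial
  non-archimedean absolute value whose induced topology is locally compact.
  (Equivalently: a finite extension of Q_p or F_q((t)).)\<close>
definition nonarch_local_field :: "('a::field \<Rightarrow> real) \<Rightarrow> bool" where
  "nonarch_local_field v \<longleftrightarrow>
     na_abs_value v \<and> (\<exists>x. x \<noteq> 0 \<and> v x \<noteq> 1) \<and>
     locally_compact_space (abs_topology v)"

definition mpow :: "'a::field^'n^'n \<Rightarrow> nat \<Rightarrow> 'a^'n^'n" where
  "mpow g k = (((**) g) ^^ k) (mat 1)"

definition mpow_int :: "'a::field^'n^'n \<Rightarrow> int \<Rightarrow> 'a^'n^'n" where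
  "mpow_int g k = (if 0 \<le> k then mpow g (nat k) else mpow (matrix_inv g) (nat (- k)))"

definition SL :: "('a::field^'n^'n) set" where
  "SL = {A. det A = 1}"

definition is_subgroup_SL :: "('a::field^'n^'n) set \<Rightarrow> bool" where
  "is_subgroup_SL G \<longleftrightarrow> G \<subseteq> SL \<and> mat 1 \<in> G \<and>
     (\<forall>a\<in>G. \<forall>b\<in>G. a ** b \<in> G) \<and> (\<forall>a\<in>G. matrix_inv a \<in> G)"

definition cyclic_subgroup :: "'a::field^'n^'n \<Rightarrow> ('a^'n^'n) set" where
  "cyclic_subgroup g = range (mpow_int g)"

definition has_order :: "'a::field^'n^'n \<Rightarrow> nat \<Rightarrow> bool" where
  "has_order g m \<longleftrightarrow> 0 < m \<and> mpow g m = mat 1 \<and> (\<forall>k. 0 < k \<and> k < m \<longrightarrow> mpow g k \<noteq> mat 1)"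

text \<open>A set S of matrices is discrete in the subspace topology inherited from
  K^(n*n) (product of the v-topology): every point of S is isolated, i.e. has a
  basic product neighbourhood (all entries within eps) meeting S only in itself.\<close>
definition discrete_set :: "('a::field \<Rightarrow> real) \<Rightarrow> ('a^'n^'n) set \<Rightarrow> bool" where
  "discrete_set v S \<longleftrightarrow>
     (\<forall>g\<in>S. \<exists>e>0. \<forall>h\<in>S. (\<forall>i j. v (h$i$j - g$i$j) < e) \<longrightarrow> h = g)"

end

theory Submission
  imports Defs "HOL-Computational_Algebra.Primes"
begin


lemma na_props:
  assumes "na_abs_value v"
  shows "v 0 = 0" "v 1 = 1" "v (-x) = v x" "v (x*y) = v x * v y"
    "v (x+y) \<le> max (v x) (v y)" "0 \<le> v x" "v x = 0 \<longleftrightarrow> x = 0"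
proof -
  note A = assms[unfolded na_abs_value_def]
  have vm: "\<And>a b. v (a*b) = v a * v b" using A by blast
  show "v 0 = 0" using A by blast
  have "v 1 = v (1 * 1)" by simp
  also have "\<dots> = v 1 * v 1" by (rule vm)
  finally have e: "v 1 * 1 = v 1 * v 1" by simp
  have n0: "v 1 \<noteq> 0" using A by auto
  have "1 = v 1" using mult_left_cancel[OF n0, of 1 "v 1"] e by blast
  then show v1: "v 1 = 1" by simp
  have "v ((-1) * (-1)) = v (-1) * v (-1)" by (rule vm)
  then have "v (-1) ^ 2 = 1" using v1 by (simp add: power2_eq_square)
  then have "v (-1) = 1 \<or> v (-1) = -1" by (simp add: power2_eq_1_iff)
  moreover have "v (-1) \<ge> 0" using A by blast
  ultimately have vm1: "v (-1) = 1" by linarith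
  have "v (-x) = v ((-1) * x)" by simp
  also have "\<dots> = v (-1) * v x" by (rule vm)
  finally show "v (-x) = v x" using vm1 by simp
  show "v (x*y) = v x * v y" by (rule vm)
  show "v (x+y) \<le> max (v x) (v y)" "0 \<le> v x" "v x = 0 \<longleftrightarrow> x = 0" using A by blast+
qed

lemma v_zero[simp]: "na_abs_value v \<Longrightarrow> v 0 = 0"
  using na_props(1) by blast

lemma v_diff_le:
  assumes "na_abs_value v" shows "v (x - y) \<le> max (v x) (v y)"
  using na_props(5)[OF assms, of x "-y"] na_props(3)[OF assms, of y] by simp

lemma v_commute:
  assumes "na_abs_value v" shows "v (x - y) = v (y - x)"
  using na_props(3)[OF assms, of "x - y"] by simp

lemma v_sum:
  assumes "na_abs_value v" "finite S" "0 \<le> c" "\<And>i. i \<in> S \<Longrightarrow> v (f i) \<le> c"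
  shows "v (sum f S) \<le> c"
  using assms(2,4)
proof (induction S rule: finite_induct)
  case empty then show ?case using assms by simp
next
  case (insert x F)
  then have "v (f x + sum f F) \<le> max (v (f x)) (v (sum f F))" using na_props[OF assms(1)] by blast
  moreover have "v (f x) \<le> c" using insert by simp
  moreover have "v (sum f F) \<le> c" using insert by simp
  ultimately show ?case using insert(1,2) by simp
qed

lemma v_of_nat:
  assumes "na_abs_value v" shows "v (of_nat n) \<le> 1"
proof (induction n)
  case 0 then show ?case using assms by simp
next
  case (Suc n)
  have "v (1 + of_nat n) \<le> max (v 1) (v (of_nat n))" using na_props[OF assms] by blast
  with Suc show ?case using na_props[OF assms] by simp
qed

lemma v_power:
  assumes "na_abs_value v" shows "v (x ^ m) = v x ^ m"
  by (induction m) (simp_all add: na_props[OF assms])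

lemma v_strict:
  assumes "na_abs_value v" "v b < v a" shows "v (a + b) = v a"
proof -
  have 1: "v (a + b) \<le> v a" using na_props(5)[OF assms(1), of a b] assms(2) by simp
  have "v a = v ((a + b) + (-b))" by simp
  also have "\<dots> \<le> max (v (a+b)) (v (-b))" using na_props(5)[OF assms(1)] by blast
  finally have "v a \<le> max (v (a+b)) (v b)" using na_props(3)[OF assms(1)] by simp
  with assms(2) 1 show ?thesis by linarith
qed

definition bnd :: "('a::field \<Rightarrow> real) \<Rightarrow> 'a^'m^'k \<Rightarrow> real \<Rightarrow> bool" where
  "bnd v X r \<longleftrightarrow> (\<forall>i j. v (X$i$j) \<le> r)"

lemma bnd_nonneg: assumes "na_abs_value v" "bnd v X r" shows "0 \<le> r"
  using assms na_props(6)[OF assms(1)] unfolding bnd_def by (meson order_trans)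

lemma bnd_mono: "bnd v X r \<Longrightarrow> r \<le> r' \<Longrightarrow> bnd v X r'"
  unfolding bnd_def by (meson order_trans)

lemma bnd_add: assumes "na_abs_value v" "bnd v X r" "bnd v Y r" shows "bnd v (X + Y) r"
  unfolding bnd_def
proof (intro allI)
  fix i j
  have "v (X$i$j + Y$i$j) \<le> max (v (X$i$j)) (v (Y$i$j))" by (rule na_props(5)[OF assms(1)])
  moreover have "v (X$i$j) \<le> r" "v (Y$i$j) \<le> r" using assms(2,3) unfolding bnd_def by blast+
  ultimately show "v ((X + Y)$i$j) \<le> r" by simp
qed

lemma bnd_diff: assumes "na_abs_value v" "bnd v X r" "bnd v Y r" shows "bnd v (X - Y) r"
  unfolding bnd_def
proof (intro allI)
  fix i j
  have "v (X$i$j - Y$i$j) \<le> max (v (X$i$j)) (v (Y$i$j))" by (rule v_diff_le[OF assms(1)])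
  moreover have "v (X$i$j) \<le> r" "v (Y$i$j) \<le> r" using assms(2,3) unfolding bnd_def by blast+
  ultimately show "v ((X - Y)$i$j) \<le> r" by simp
qed

lemma bnd_zero: assumes "na_abs_value v" "0 \<le> r" shows "bnd v 0 r"
  using assms unfolding bnd_def by simp

lemma bnd_mat1: assumes "na_abs_value v" shows "bnd v (mat 1 :: 'a::field^'n^'n) 1"
  unfolding bnd_def mat_def by (simp add: v_zero[OF assms] na_props(2)[OF assms])

lemma bnd_mult:
  assumes "na_abs_value v" "bnd v (X::'a::field^'m^'k) r" "bnd v (Y::'a^'p^'m) s"
  shows "bnd v (X ** Y) (r * s)"
  unfolding bnd_def
proof (intro allI)
  fix i j
  have r0: "0 \<le> r" "0 \<le> s" using bnd_nonneg assms by blast+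
  have "v (sum (\<lambda>k. X$i$k * Y$k$j) UNIV) \<le> r * s"
  proof (rule v_sum[OF assms(1)])
    fix k
    have "v (X$i$k * Y$k$j) = v (X$i$k) * v (Y$k$j)" using na_props[OF assms(1)] by blast
    also have "\<dots> \<le> r * s" using assms(2,3) r0 na_props(6)[OF assms(1)] unfolding bnd_def
      by (meson mult_mono)
    finally show "v (X$i$k * Y$k$j) \<le> r * s" .
  qed (use r0 in auto)
  then show "v ((X ** Y)$i$j) \<le> r * s" by (simp add: matrix_matrix_mult_def)
qed

lemma bnd_exists: assumes "na_abs_value v" shows "\<exists>M>0. bnd v (X::'a::field^'m^'k) M"
proof -
  define M where "M = 1 + (\<Sum>i\<in>UNIV. \<Sum>j\<in>UNIV. v (X$i$j))"
  have nn: "0 \<le> v (X$i$j)" for i j using na_props(6)[OF assms] .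
  have "v (X$i$j) \<le> (\<Sum>j\<in>UNIV. v (X$i$j))" for i j
    by (rule member_le_sum) (auto simp: nn)
  also have "(\<Sum>j\<in>UNIV. v (X$i$j)) \<le> (\<Sum>i\<in>UNIV. \<Sum>j\<in>UNIV. v (X$i$j))" for i
    by (rule member_le_sum) (auto simp: nn sum_nonneg)
  finally have "bnd v X M" unfolding bnd_def M_def by (simp add: add.commute add_increasing)
  moreover have "M > 0" unfolding M_def using nn by (simp add: add_pos_nonneg sum_nonneg)
  ultimately show ?thesis by blast
qed

lemma matrix_add_rdistrib': "((B + C) ** (A::'a::field^'n^'n)) = (B ** A) + (C ** A)"
  by (vector matrix_matrix_mult_def sum.distrib[symmetric] field_simps)

lemma matrix_diff_ldistrib': "(A ** (B - C)) = (A ** B) - (A ** (C::'a::field^'n^'n))"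
  by (vector matrix_matrix_mult_def sum_subtractf[symmetric] field_simps)

lemma mpow_0[simp]: "mpow g 0 = mat 1" by (simp add: mpow_def)
lemma mpow_Suc: "mpow g (Suc k) = g ** mpow g k" by (simp add: mpow_def)
lemma mpow_add: "mpow g (a + b) = mpow g a ** mpow g b"
  by (induction a) (simp_all add: mpow_Suc matrix_mul_assoc)
lemma mpow_1[simp]: "mpow g 1 = g" by (simp add: mpow_Suc)
lemma mpow_mult: "mpow g (a * b) = mpow (mpow g a) b"
  by (induction b) (simp_all add: mpow_Suc mpow_add)
lemma mpow_mat1[simp]: "mpow (mat 1) a = (mat 1 :: 'a::field^'n^'n)"
  by (induction a) (simp_all add: mpow_Suc)

lemma mpow_in_G: assumes "is_subgroup_SL G" "g \<in> G" shows "mpow g k \<in> G"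
  using assms by (induction k) (auto simp: mpow_Suc is_subgroup_SL_def)

lemma mpow_int_in_G: assumes "is_subgroup_SL G" "g \<in> G" shows "mpow_int g k \<in> G"
  using assms mpow_in_G[OF assms(1)] unfolding mpow_int_def is_subgroup_SL_def by auto

lemma mpow_in_cyc: "mpow g k \<in> cyclic_subgroup g"
proof -
  have "mpow_int g (int k) = mpow g k" by (simp add: mpow_int_def)
  then show ?thesis unfolding cyclic_subgroup_def by (metis rangeI)
qed

lemma mat1_in_cyc: "mat 1 \<in> cyclic_subgroup g"
  using mpow_in_cyc[of g 0] by simp



lemma expand_pow:
  assumes na: "na_abs_value v" and bY: "bnd v (Y::'a::field^'n^'n) s" and s1: "s \<le> 1"
  shows "\<exists>E. bnd v E s \<and> (\<forall>a b. (mpow (mat 1 + Y) i - mat 1)$a$b = of_nat i * Y$a$b + (Y ** E)$a$b)"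
proof (induction i)
  case 0
  have "0 \<le> s" using bnd_nonneg[OF na bY] .
  then show ?case by (intro exI[of _ 0]) (simp add: bnd_zero[OF na])
next
  case (Suc i)
  then obtain E where bE: "bnd v E s"
    and eq: "\<And>a b. (mpow (mat 1 + Y) i - mat 1)$a$b = of_nat i * Y$a$b + (Y ** E)$a$b" by blast
  define P where "P = mpow (mat 1 + Y) i - mat 1"
  have s0: "0 \<le> s" using bnd_nonneg[OF na bY] .
  have bP: "bnd v P s" unfolding bnd_def
  proof (intro allI)
    fix a b
    have "v (of_nat i * Y$a$b) \<le> s"
    proof -
      have "v (of_nat i * Y$a$b) = v (of_nat i) * v (Y$a$b)" using na_props(4)[OF na] .
      also have "\<dots> \<le> 1 * s"
      proof (rule mult_mono)
        show "v (of_nat i) \<le> 1" by (rule v_of_nat[OF na])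
        show "v (Y$a$b) \<le> s" using bY unfolding bnd_def by blast
      qed (use na_props(6)[OF na] in auto)
      finally show ?thesis by simp
    qed
    moreover have "v ((Y ** E)$a$b) \<le> s"
    proof -
      have "bnd v (Y ** E) (s * s)" by (rule bnd_mult[OF na bY bE])
      then have "v ((Y ** E)$a$b) \<le> s * s" unfolding bnd_def by blast
      also have "s * s \<le> s" using s0 s1 by (simp add: mult_le_cancel_right1 mult_left_le)
      finally show ?thesis .
    qed
    ultimately show "v (P$a$b) \<le> s" unfolding P_def eq
      using na_props(5)[OF na, of "of_nat i * Y$a$b" "(Y ** E)$a$b"] by linarith
  qed
  have m: "mpow (mat 1 + Y) i = mat 1 + P" unfolding P_def by simp
  have "mpow (mat 1 + Y) (Suc i) - mat 1 = P + Y + Y ** P"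
    unfolding mpow_Suc m by (simp add: matrix_add_rdistrib' matrix_add_ldistrib)
  then have "(mpow (mat 1 + Y) (Suc i) - mat 1)$a$b = of_nat (Suc i) * Y$a$b + (Y ** (E + P))$a$b" for a b
    using eq[of a b] unfolding P_def[symmetric] by (simp add: matrix_add_ldistrib algebra_simps)
  moreover have "bnd v (E + P) s" by (rule bnd_add[OF na bE bP])
  ultimately show ?case by blast
qed

lemma pow_bound:
  assumes na: "na_abs_value v" and bY: "bnd v (k - mat 1) s" and s1: "s \<le> 1"
  shows "bnd v (mpow k i - mat 1) (max (v (of_nat i) * s) (s * s))"
proof -
  define Y where "Y = k - mat 1"
  have k: "k = mat 1 + Y" unfolding Y_def by simp
  obtain E where bE: "bnd v E s"
    and eq: "\<And>a b. (mpow k i - mat 1)$a$b = of_nat i * Y$a$b + (Y ** E)$a$b"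
    using expand_pow[OF na bY[folded Y_def] s1, of i] k by blast
  have s0: "0 \<le> s" using bnd_nonneg[OF na bY] .
  show ?thesis unfolding bnd_def
  proof (intro allI)
    fix a b
    have "v (of_nat i * Y$a$b) \<le> v (of_nat i) * s"
      using na_props(4)[OF na] na_props(6)[OF na] bY[folded Y_def] unfolding bnd_def
      by (simp add: mult_left_mono)
    moreover have "v ((Y ** E)$a$b) \<le> s * s"
      using bnd_mult[OF na bY[folded Y_def] bE] unfolding bnd_def by blast
    ultimately show "v ((mpow k i - mat 1)$a$b) \<le> max (v (of_nat i) * s) (s * s)"
      unfolding eq using na_props(5)[OF na, of "of_nat i * Y$a$b" "(Y ** E)$a$b"] by linarith
  qed
qed

lemma iter_bound:
  assumes na: "na_abs_value v" and bh: "bnd v (h - mat 1) r" and r1: "r < 1"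
  shows "bnd v (mpow h (n^m) - mat 1) (max (v (of_nat n)) r ^ m * r)"
proof (induction m)
  case 0 then show ?case using bh by (simp add: mpow_Suc)
next
  case (Suc m)
  define t where "t = max (v (of_nat n)) r"
  have r0: "0 \<le> r" using bnd_nonneg[OF na bh] .
  have t0: "0 \<le> t" "t \<le> 1" "r \<le> t" "v (of_nat n) \<le> t" unfolding t_def using r0 r1 v_of_nat[OF na] by auto
  have tm: "t ^ m \<le> 1" "0 \<le> t^m" using t0 by (simp_all add: power_le_one)
  define s where "s = t ^ m * r"
  have s0: "0 \<le> s" "s \<le> r" unfolding s_def using tm r0 by (simp_all add: mult_left_le_one_le)
  have "mpow h (n ^ Suc m) = mpow (mpow h (n^m)) n" by (simp only: power_Suc2 mpow_mult)
  moreover have "bnd v (mpow (mpow h (n^m)) n - mat 1) (max (v (of_nat n) * s) (s * s))"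
    by (rule pow_bound[OF na]) (use Suc s0 r1 in \<open>simp_all add: s_def t_def\<close>)
  moreover have "max (v (of_nat n) * s) (s * s) \<le> t ^ Suc m * r"
  proof -
    have "v (of_nat n) * s \<le> t * s" using t0 s0 by (simp add: mult_right_mono)
    moreover have "s * s \<le> t * s" using t0 s0 by (simp add: mult_right_mono)
    moreover have "t * s = t ^ Suc m * r" unfolding s_def by (simp add: mult.assoc)
    ultimately show ?thesis by simp
  qed
  ultimately have "bnd v (mpow h (n ^ Suc m) - mat 1) (t ^ Suc m * r)"
    using bnd_mono by metis
  then show ?case unfolding t_def .
qed

lemma no_small_torsion:
  assumes na: "na_abs_value v" and k1: "k \<noteq> mat 1" and bk: "bnd v (k - mat 1) s"
    and sn: "s < v (of_nat n)" and s1: "s \<le> 1" and kn: "mpow k n = (mat 1::'a::field^'n^'n)"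
  shows False
proof -
  define Y where "Y = k - mat 1"
  define f where "f = (\<lambda>(i,j). v (Y$i$j))"
  have fin: "finite (range f)" by simp
  have "Max (range f) \<in> range f" by (rule Max_in[OF fin]) simp
  then obtain q where q: "Max (range f) = f q" by blast
  obtain a b where "q = (a,b)" by (cases q)
  with q have abM: "f (a,b) = Max (range f)" by simp
  have ab: "v (Y$i$j) \<le> v (Y$a$b)" for i j
  proof -
    have "f (i,j) \<le> Max (range f)" by (rule Max_ge[OF fin]) simp
    then show ?thesis using abM unfolding f_def by simp
  qed
  define s' where "s' = v (Y$a$b)"
  have bY: "bnd v Y s'" unfolding bnd_def s'_def using ab by blast
  have "Y \<noteq> 0" using k1 unfolding Y_def by auto
  have "\<exists>i j. Y$i$j \<noteq> 0"
  proof (rule ccontr)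
    assume "\<not> (\<exists>i j. Y$i$j \<noteq> 0)"
    then have "Y = 0" by (simp add: vec_eq_iff)
    with \<open>Y \<noteq> 0\<close> show False by simp
  qed
  then obtain i j where ij: "Y$i$j \<noteq> 0" by blast
  have "v (Y$i$j) \<noteq> 0" using na_props(7)[OF na] ij by simp
  then have "0 < v (Y$i$j)" using na_props(6)[OF na, of "Y$i$j"] by linarith
  then have s'0: "0 < s'" using ab[of i j] s'_def by linarith
  have s's: "s' \<le> s" using bk unfolding bnd_def s'_def Y_def by blast
  have k: "k = mat 1 + Y" unfolding Y_def by simp
  obtain E where bE: "bnd v E s'"
    and eq: "\<And>a b. (mpow k n - mat 1)$a$b = of_nat n * Y$a$b + (Y ** E)$a$b"
    using expand_pow[OF na bY, of n] s's s1 k by auto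
  have "0 = of_nat n * Y$a$b + (Y ** E)$a$b" using eq[of a b] kn by simp
  then have "(Y ** E)$a$b = - (of_nat n * Y$a$b)" by (simp add: eq_neg_iff_add_eq_0 add.commute)
  then have "v ((Y ** E)$a$b) = v (of_nat n) * s'"
    using na_props(3,4)[OF na] s'_def by simp
  moreover have "v ((Y ** E)$a$b) \<le> s' * s'" using bnd_mult[OF na bY bE] unfolding bnd_def by blast
  moreover have "s' * s' < v (of_nat n) * s'" using s'0 s's sn by simp
  ultimately show False by linarith
qed

lemma order_p:
  assumes p: "prime (p::nat)" and kp: "mpow k p = (mat 1::'a::field^'n^'n)"
    and j: "0 < j" "j < p" and kj: "mpow k j = mat 1"
  shows "k = mat 1"
proof -
  have "\<not> p dvd j" using j by (simp add: nat_dvd_not_less)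
  then have "coprime p j" using p by (rule prime_imp_coprime[rotated])
  then have "coprime j p" by (simp add: coprime_commute)
  then obtain x y where xy: "j * x = p * y + 1" using bezout_nat[of j p] j by auto
  have "mpow k (j * x) = mat 1" by (simp add: mpow_mult kj)
  moreover have "mpow k (p * y + 1) = k" by (simp only: mpow_add mpow_mult kp mpow_mat1 mpow_1 matrix_mul_lid)
  ultimately show ?thesis using xy by simp
qed



lemma metric_v: assumes na: "na_abs_value v"
  shows "Metric_space (UNIV::'a::field set) (\<lambda>x y. v (x - y))"
proof
  fix x y z :: 'a
  show "0 \<le> v (x - y)" using na_props(6)[OF na] .
  show "v (x - y) = v (y - x)" using v_commute[OF na] .
  show "v (x - y) = 0 \<longleftrightarrow> x = y" using na_props(7)[OF na] by simp
  have "v (x - z) = v ((x - y) + (y - z))" by simp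
  also have "\<dots> \<le> max (v (x - y)) (v (y - z))" using na_props(5)[OF na] .
  also have "\<dots> \<le> v (x - y) + v (y - z)" using na_props(6)[OF na] by simp
  finally show "v (x - z) \<le> v (x - y) + v (y - z)" .
qed

lemma small_elem:
  assumes lf: "nonarch_local_field v" and e: "0 < e"
  shows "\<exists>y::'a::field. y \<noteq> 0 \<and> v y < e"
proof -
  have na: "na_abs_value v" using lf unfolding nonarch_local_field_def by blast
  obtain x :: 'a where x: "x \<noteq> 0" "v x \<noteq> 1" using lf unfolding nonarch_local_field_def by blast
  have "v x \<noteq> 0" using x na_props(7)[OF na] by simp
  then have vx: "0 < v x" using na_props(6)[OF na, of x] by linarith
  obtain z :: 'a where z: "z \<noteq> 0" "v z < 1"
  proof (cases "v x < 1")
    case True then show ?thesis using that x by blast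
  next
    case False
    then have gt: "v x > 1" using x by simp
    have "v x * v (inverse x) = v (x * inverse x)" using na_props(4)[OF na] by simp
    also have "\<dots> = 1" using x na_props(2)[OF na] by simp
    finally have "v x * v (inverse x) = 1" .
    then have "v (inverse x) = 1 / v x" using vx by (simp add: field_simps)
    then have "v (inverse x) < 1" using gt by simp
    moreover have "inverse x \<noteq> 0" using x by simp
    ultimately show ?thesis using that by blast
  qed
  obtain m where "v z ^ m < e" using real_arch_pow_inv[OF e z(2)] by blast
  then have "v (z ^ m) < e" using v_power[OF na, of z m] by simp
  moreover have "z ^ m \<noteq> 0" using z by simp
  ultimately show ?thesis by blast
qed

lemma exists_small_int:
  assumes lf: "nonarch_local_field v" and ch: "CHAR('a::field) = 0"
  shows "\<exists>n\<ge>1. v (of_nat n :: 'a) < 1"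
proof (rule ccontr)
  assume H: "\<not> (\<exists>n\<ge>1. v (of_nat n :: 'a) < 1)"
  have na: "na_abs_value v" using lf unfolding nonarch_local_field_def by blast
  interpret ms: Metric_space "UNIV::'a set" "\<lambda>x y. v (x - y)" by (rule metric_v[OF na])
  have lc: "locally_compact_space ms.mtopology"
    using lf unfolding nonarch_local_field_def abs_topology_def by blast
  have "0 \<in> topspace ms.mtopology" by simp
  then obtain U Kc where UK: "openin ms.mtopology U" "compactin ms.mtopology Kc" "0 \<in> U" "U \<subseteq> Kc"
    using lc unfolding locally_compact_space_def by blast
  have "\<forall>x. x \<in> U \<longrightarrow> (\<exists>r>0. ms.mball x r \<subseteq> U)"
    using UK(1) ms.openin_mtopology by blast
  then obtain \<epsilon> where eps: "\<epsilon> > 0" "ms.mball 0 \<epsilon> \<subseteq> U" using UK(3) by blast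
  obtain y :: 'a where y: "y \<noteq> 0" "v y < \<epsilon>" using small_elem[OF lf eps(1)] by blast
  have "v y \<noteq> 0" using y na_props(7)[OF na] by simp
  then have vy: "0 < v y" using na_props(6)[OF na, of y] by linarith
  define \<sigma> where "\<sigma> k = y * of_nat k" for k
  have "range \<sigma> \<subseteq> Kc"
  proof
    fix w assume "w \<in> range \<sigma>"
    then obtain k where k: "w = \<sigma> k" by blast
    have "v (0 - w) = v y * v (of_nat k)" using na_props(3,4)[OF na] unfolding k \<sigma>_def by simp
    also have "\<dots> \<le> v y" using v_of_nat[OF na] vy by (simp add: mult_left_le)
    finally have "w \<in> ms.mball 0 \<epsilon>" using y by simp
    then show "w \<in> Kc" using eps UK by blast
  qed
  moreover have "\<forall>\<sigma>::nat\<Rightarrow>'a. range \<sigma> \<subseteq> Kc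
         \<longrightarrow> (\<exists>l r. l \<in> Kc \<and> strict_mono r \<and> limitin ms.mtopology (\<sigma> \<circ> r) l sequentially)"
    using UK(2) ms.compactin_sequentially by blast
  ultimately obtain l r where lr: "strict_mono r" "limitin ms.mtopology (\<sigma> \<circ> r) l sequentially"
    by blast
  from lr(2) have "\<forall>\<epsilon>>0. eventually (\<lambda>x. v ((\<sigma> \<circ> r) x - l) < \<epsilon>) sequentially"
    unfolding ms.limitin_metric by simp
  then have lim: "\<forall>\<epsilon>>0. eventually (\<lambda>x. v (\<sigma> (r x) - l) < \<epsilon>) sequentially"
    by (simp add: o_def)
  have "eventually (\<lambda>x. v (\<sigma> (r x) - l) < v y / 2) sequentially"
    using lim[rule_format, of "v y / 2"] vy by linarith
  then obtain N where N: "\<And>x. x \<ge> N \<Longrightarrow> v (\<sigma> (r x) - l) < v y / 2"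
    unfolding eventually_sequentially by auto
  have "v (\<sigma> (r N) - \<sigma> (r (Suc N))) \<le> v (\<sigma> (r N) - l) + v (l - \<sigma> (r (Suc N)))"
    by (rule ms.triangle) auto
  also have "\<dots> < v y"
  proof -
    have "v (l - \<sigma> (r (Suc N))) = v (\<sigma> (r (Suc N)) - l)" by (rule v_commute[OF na])
    then show ?thesis using N[of N] N[of "Suc N"] by linarith
  qed
  finally have lt: "v (\<sigma> (r N) - \<sigma> (r (Suc N))) < v y" .
  have ab: "r N < r (Suc N)" by (rule strict_monoD[OF lr(1)]) simp
  define a b where "a = r N" and "b = r (Suc N)"
  have ab': "a < b" using ab unfolding a_def b_def .
  have "a + (b - a) = b" using ab' by simp
  then have "(of_nat b :: 'a) = of_nat (a + (b - a))" by (simp only:)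
  then have "(of_nat b :: 'a) = of_nat a + of_nat (b - a)" by (simp only: of_nat_add)
  then have e1: "\<sigma> a - \<sigma> b = y * (- of_nat (b - a))" unfolding \<sigma>_def
    by (simp add: distrib_left)
  have e2: "v (\<sigma> a - \<sigma> b) = v y * v (of_nat (b - a) :: 'a)"
    unfolding e1 na_props(4)[OF na] na_props(3)[OF na] ..
  have w1: "v (of_nat (b - a) :: 'a) \<ge> 1"
  proof -
    have "b - a \<ge> 1" using ab' by simp
    moreover from H have "\<forall>n\<ge>1. 1 \<le> v (of_nat n :: 'a)" by (auto simp: not_less)
    ultimately show ?thesis by blast
  qed
  have "v y * 1 \<le> v y * v (of_nat (b - a) :: 'a)"
    by (rule mult_left_mono[OF w1]) (use vy in linarith)
  then have "v y \<le> v (\<sigma> a - \<sigma> b)" unfolding e2 by simp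
  then have "v y \<le> v (\<sigma> (r N) - \<sigma> (r (Suc N)))" unfolding a_def b_def .
  then show False using lt by linarith
qed



theorem proposition1p4:
  fixes v :: "'a::field \<Rightarrow> real"
    and G :: "('a^'n^'n) set"
  assumes "nonarch_local_field v"
    and "is_subgroup_SL G"
    and "CHAR('a) = 0 \<or> (CHAR('a) > 0 \<and> \<not> (\<exists>g\<in>G. has_order g CHAR('a)))"
  shows "discrete_set v G \<longleftrightarrow> (\<forall>g\<in>G. discrete_set v (cyclic_subgroup g))"
proof -
  have na: "na_abs_value v" using assms(1) unfolding nonarch_local_field_def by blast
  note SG = assms(2)
  have dir1: "discrete_set v (cyclic_subgroup g)" if dG: "discrete_set v G" and gG: "g \<in> G" for g
  proof -
    have "cyclic_subgroup g \<subseteq> G" unfolding cyclic_subgroup_def using mpow_int_in_G[OF SG gG] by blast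
    show ?thesis unfolding discrete_set_def
    proof
      fix a assume aC: "a \<in> cyclic_subgroup g"
      then have "a \<in> G" using \<open>cyclic_subgroup g \<subseteq> G\<close> by blast
      then obtain e where "e > 0" "\<forall>h\<in>G. (\<forall>i j. v (h$i$j - a$i$j) < e) \<longrightarrow> h = a"
        using dG unfolding discrete_set_def by blast
      then show "\<exists>e>0. \<forall>h\<in>cyclic_subgroup g. (\<forall>i j. v (h$i$j - a$i$j) < e) \<longrightarrow> h = a"
        using \<open>cyclic_subgroup g \<subseteq> G\<close> by blast
    qed
  qed
  have dir2: "discrete_set v G" if H: "\<forall>g\<in>G. discrete_set v (cyclic_subgroup g)"
  proof -
    obtain n where n1: "n \<ge> 1" and vn: "v (of_nat n :: 'a) < 1"
      and ch0: "CHAR('a) = 0 \<Longrightarrow> 0 < v (of_nat n :: 'a)"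
      and chp: "CHAR('a) \<noteq> 0 \<Longrightarrow> n = CHAR('a)"
    proof (cases "CHAR('a) = 0")
      case True
      obtain n where n: "n \<ge> 1" "v (of_nat n :: 'a) < 1" using exists_small_int[OF assms(1) True] by blast
      have "(of_nat n :: 'a) \<noteq> 0" using n True by (simp add: of_nat_eq_0_iff_char_dvd)
      then have "v (of_nat n :: 'a) \<noteq> 0" using na_props(7)[OF na] by simp
      then have "0 < v (of_nat n :: 'a)" using na_props(6)[OF na, of "of_nat n"] by linarith
      then show ?thesis using True by (intro that[of n] n) auto
    next
      case False
      have "v (of_nat CHAR('a) :: 'a) < 1" using na by simp
      moreover have "CHAR('a) \<ge> 1" using False by simp
      ultimately show ?thesis using False by (intro that[of "CHAR('a)"]) auto
    qed
    define c where "c = v (of_nat n :: 'a)"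
    define r0 where "r0 = (if CHAR('a) = 0 then min (1/2) (c/2) else 1/2)"
    have r0: "0 < r0" "r0 < 1" "CHAR('a) = 0 \<Longrightarrow> r0 < c"
      using ch0 unfolding r0_def c_def by auto
    have c1: "c < 1" using vn c_def by simp
    show "discrete_set v G" unfolding discrete_set_def
    proof (intro ballI, rule ccontr)
      fix g assume gG: "g \<in> G"
        and nd: "\<not> (\<exists>e>0. \<forall>h\<in>G. (\<forall>i j. v (h$i$j - g$i$j) < e) \<longrightarrow> h = g)"
      define gi where "gi = matrix_inv g"
      have "det g = 1" using SG gG unfolding is_subgroup_SL_def SL_def by blast
      then have "invertible g" by (simp add: invertible_det_nz)
      then have gig: "g ** gi = mat 1 \<and> gi ** g = mat 1"
        unfolding invertible_def gi_def matrix_inv_def by (rule someI_ex)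
      have giG: "gi \<in> G" using SG gG unfolding is_subgroup_SL_def gi_def by blast
      obtain M where M: "M > 0" "bnd v gi M" using bnd_exists[OF na] by blast
      have eM: "r0 / M > 0" using M r0 by simp
      have "\<exists>h\<in>G. (\<forall>i j. v (h$i$j - g$i$j) < r0 / M) \<and> h \<noteq> g"
      proof (rule ccontr)
        assume "\<not> (\<exists>h\<in>G. (\<forall>i j. v (h$i$j - g$i$j) < r0 / M) \<and> h \<noteq> g)"
        then have "\<forall>h\<in>G. (\<forall>i j. v (h$i$j - g$i$j) < r0 / M) \<longrightarrow> h = g" by blast
        with eM nd show False by blast
      qed
      then obtain h where hG: "h \<in> G" and close: "\<forall>i j. v (h$i$j - g$i$j) < r0 / M" and hg: "h \<noteq> g"
        by blast
      define x where "x = gi ** h"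
      have xG: "x \<in> G" using SG giG hG unfolding is_subgroup_SL_def x_def by blast
      have x1: "x \<noteq> mat 1"
      proof
        assume "x = mat 1"
        then have "g ** x = g" by simp
        moreover have "g ** x = h" unfolding x_def using gig by (simp add: matrix_mul_assoc)
        ultimately show False using hg by simp
      qed
      have "x - mat 1 = gi ** (h - g)" unfolding x_def using gig by (simp add: matrix_diff_ldistrib')
      moreover have "bnd v (h - g) (r0 / M)" unfolding bnd_def using close by (simp add: less_imp_le)
      moreover have "M * (r0 / M) = r0" using M(1) by simp
      ultimately have bx: "bnd v (x - mat 1) r0"
        using bnd_mult[OF na M(2), of "h - g" "r0 / M"] by simp
      define t where "t = max c r0"
      have t1: "t < 1" "0 \<le> t" using c1 r0 unfolding t_def by auto
      have iter: "bnd v (mpow x (n^m) - mat 1) (t^m * r0)" for m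
        using iter_bound[OF na bx r0(2), of n m] unfolding t_def c_def .
      have dc: "discrete_set v (cyclic_subgroup x)" using H xG by blast
      have "\<exists>e>0. \<forall>h\<in>cyclic_subgroup x. (\<forall>i j. v (h$i$j - mat 1$i$j) < e) \<longrightarrow> h = mat 1"
        using bspec[OF dc[unfolded discrete_set_def] mat1_in_cyc] .
      then obtain e where e: "e > 0"
        and eH: "\<And>h. h \<in> cyclic_subgroup x \<Longrightarrow> (\<forall>i j. v (h$i$j - mat 1$i$j) < e) \<Longrightarrow> h = mat 1"
        by blast
      obtain m where tm: "t ^ m < e" using real_arch_pow_inv[OF e t1(1)] by blast
      have Pm: "mpow x (n^m) = mat 1"
      proof (rule eH[OF mpow_in_cyc], intro allI)
        fix i j
        have "v ((mpow x (n^m) - mat 1)$i$j) \<le> t^m * r0" using iter[of m] unfolding bnd_def by blast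
        also have "\<dots> \<le> t^m" using r0 t1 by (simp add: mult_right_le_one_le)
        finally show "v (mpow x (n^m)$i$j - mat 1$i$j) < e" using tm by simp
      qed
      define m0 where "m0 = (LEAST m. mpow x (n^m) = mat 1)"
      have P0: "mpow x (n^m0) = mat 1" unfolding m0_def by (rule LeastI[of _ m]) (rule Pm)
      have "m0 \<noteq> 0"
      proof
        assume "m0 = 0"
        then have "mpow x (n^m0) = x" by (simp add: mpow_Suc)
        with P0 x1 show False by simp
      qed
      then obtain m1 where m1: "m0 = Suc m1" using not0_implies_Suc by blast
      define k where "k = mpow x (n^m1)"
      have "m1 < m0" using m1 by simp
      then have k1: "k \<noteq> mat 1" unfolding k_def m0_def by (rule not_less_Least)
      have kn: "mpow k n = mat 1" using P0 unfolding k_def m1 by (simp only: power_Suc2 mpow_mult)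
      have "t^m1 * r0 \<le> r0" using r0 t1 by (simp add: mult_left_le_one_le power_le_one)
      then have bk: "bnd v (k - mat 1) r0" using iter[of m1] bnd_mono unfolding k_def by blast
      show False
      proof (cases "CHAR('a) = 0")
        case True
        show False
          by (rule no_small_torsion[OF na k1 bk _ _ kn]) (use r0 True c_def in auto)
      next
        case False
        have np: "n = CHAR('a)" using chp False by blast
        have pr: "prime n" using np False by (simp add: prime_CHAR_semidom)
        have kG: "k \<in> G" unfolding k_def by (rule mpow_in_G[OF SG xG])
        have "\<forall>j. 0 < j \<and> j < n \<longrightarrow> mpow k j \<noteq> mat 1"
          using order_p[OF pr kn] k1 by blast
        then have "has_order k n" unfolding has_order_def using kn n1 by simp
        then show False using assms(3) False np kG by blast
      qed
    qed
  qed
  show ?thesis using dir1 dir2 by blast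
qed


end
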